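(* Let $P$ be a finite graded poset with $\hat0$ and let $\lambda$ be an ER-labeling of $P$ satisfying the rank two switching property and the braid relation. Then for every interval $[x,y]$ of $P$, each connected component of the graph $G_{[x,y]}$ contains a unique sink, i.e., a unique ascent-free maximal chain of $[x,y]$.
   Context: An E-labeling of $P$ is a map $\lambda$ from the set of cover relations $x\lessdot y$ of $P$ to a poset $\Lambda$. The word of labels of a saturated chain $x_0\lessdot x_1\lessdot\cdots\lessdot x_\ell$ is $\lambda(x_0\lessdot x_1)\cdots\lambda(x_{\ell-1}\lessdot x_\ell)$; the chain is increasing if this word is strictly increasing in $\Lambda$, and ascent-free if there is no $i$ with $\lambda(x_{i-1}\lessdot x_i)<\lambda(x_i\lessdot x_{i+1})$. $\lambda$ is an ER-labeling if every closed interval has exactly one increasing maximal chain. $\lambda$ has the rank two switching property if for every saturated chain $\hat0=x_0\lessdot\cdots\lessdot x_k$ and every $i$ with $\lambda(x_{i-1}\lessdot x_i)<\lambda(x_i\lessdot x_{i+1})$ there is a unique element $x_i'$ with $x_{i-1}\lessdot x_i'\lessdot x_{i+1}$, $\lambda(x_{i-1}\lessdot x_i')=\lambda(x_i\lessdot x_{i+1})$ and $\lambda(x_i'\lessdot x_{i+1})=\lambda(x_{i-1}\lessdot x_i)$. For a maximal chain $\mathbf c$ of an interval $[x,y]$ with an ascent at rank position $i$, the quadratic exchange $U_i(\mathbf c)$ replaces $x_i$ by this $x_i'$; if there is no ascent at position $i$, $U_i(\mathbf c)=\mathbf c$. $G_{[x,y]}$ is the directed graph on the maximal chains of $[x,y]$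 with an edge $\mathbf c\to U_i(\mathbf c)$ whenever $U_i(\mathbf c)\neq\mathbf c$; a sink is a vertex of outdegree $0$. The braid relation holds if for every maximal chain $\mathbf c$ of any interval with $\lambda(x_{i-1}\lessdot x_i)<\lambda(x_i\lessdot x_{i+1})<\lambda(x_{i+1}\lessdot x_{i+2})$ we have $U_iU_{i+1}U_i(\mathbf c)=U_{i+1}U_iU_{i+1}(\mathbf c)$. *)

theory Defs
  imports Main
begin

text \<open>A poset is a finite carrier set P inside a type with a partial order.
  Chains are represented as lists of elements.\<close>

definition cov :: "'a::order set \<Rightarrow> 'a \<Rightarrow> 'a \<Rightarrow> bool" where
  "cov P x y \<longleftrightarrow> x \<in> P \<and> y \<in> P \<and> x < y \<and> \<not> (\<exists>z\<in>P. x < z \<and> z < y)"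

definition sat_chain :: "'a::order set \<Rightarrow> 'a list \<Rightarrow> bool" where
  "sat_chain P c \<longleftrightarrow> c \<noteq> [] \<and> (\<forall>i. Suc i < length c \<longrightarrow> cov P (c ! i) (c ! Suc i))"

definition maxchain :: "'a::order set \<Rightarrow> 'a \<Rightarrow> 'a \<Rightarrow> 'a list \<Rightarrow> bool" where
  "maxchain P x y c \<longleftrightarrow> sat_chain P c \<and> hd c = x \<and> last c = y"

definition graded_with_bot :: "'a::order set \<Rightarrow> 'a \<Rightarrow> bool" where
  "graded_with_bot P zero \<longleftrightarrow> finite P \<and> zero \<in> P \<and> (\<forall>x\<in>P. zero \<le> x) \<and>
     (\<exists>n. \<forall>c. sat_chain P c \<and> hd c = zero \<and> (\<forall>z\<in>P. \<not> last c < z) \<longrightarrow> length c = n)"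

text \<open>Word of labels of a chain; the labeling lam is only evaluated on covers.\<close>
definition label_word :: "('a \<Rightarrow> 'a \<Rightarrow> 'l) \<Rightarrow> 'a list \<Rightarrow> 'l list" where
  "label_word lam c = map (\<lambda>i. lam (c ! i) (c ! Suc i)) [0..<length c - 1]"

definition increasing_chain :: "('a \<Rightarrow> 'a \<Rightarrow> 'l::order) \<Rightarrow> 'a list \<Rightarrow> bool" where
  "increasing_chain lam c \<longleftrightarrow> sorted_wrt (<) (label_word lam c)"

definition ascent_free :: "('a \<Rightarrow> 'a \<Rightarrow> 'l::order) \<Rightarrow> 'a list \<Rightarrow> bool" where
  "ascent_free lam c \<longleftrightarrow>
     (\<forall>i. Suc i < length (label_word lam c) \<longrightarrow> \<not> (label_word lam c ! i < label_word lam c ! Suc i))"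

definition ascent_at :: "('a \<Rightarrow> 'a \<Rightarrow> 'l::order) \<Rightarrow> 'a list \<Rightarrow> nat \<Rightarrow> bool" where
  "ascent_at lam c i \<longleftrightarrow> 1 \<le> i \<and> Suc i < length c \<and>
     lam (c ! (i - 1)) (c ! i) < lam (c ! i) (c ! Suc i)"

definition ER_labeling :: "'a::order set \<Rightarrow> ('a \<Rightarrow> 'a \<Rightarrow> 'l::order) \<Rightarrow> bool" where
  "ER_labeling P lam \<longleftrightarrow>
     (\<forall>x\<in>P. \<forall>y\<in>P. x \<le> y \<longrightarrow> (\<exists>!c. maxchain P x y c \<and> increasing_chain lam c))"

definition switch_elem :: "'a::order set \<Rightarrow> ('a \<Rightarrow> 'a \<Rightarrow> 'l) \<Rightarrow> 'a \<Rightarrow> 'a \<Rightarrow> 'a \<Rightarrow> 'a \<Rightarrow> bool" where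
  "switch_elem P lam a b d x' \<longleftrightarrow> cov P a x' \<and> cov P x' d \<and>
     lam a x' = lam b d \<and> lam x' d = lam a b"

definition rank_two_switching :: "'a::order set \<Rightarrow> 'a \<Rightarrow> ('a \<Rightarrow> 'a \<Rightarrow> 'l::order) \<Rightarrow> bool" where
  "rank_two_switching P zero lam \<longleftrightarrow>
     (\<forall>c i. sat_chain P c \<and> hd c = zero \<and> ascent_at lam c i \<longrightarrow>
        (\<exists>!x'. switch_elem P lam (c ! (i - 1)) (c ! i) (c ! Suc i) x'))"

definition U :: "'a::order set \<Rightarrow> ('a \<Rightarrow> 'a \<Rightarrow> 'l::order) \<Rightarrow> nat \<Rightarrow> 'a list \<Rightarrow> 'a list" where
  "U P lam i c = (if ascent_at lam c i
      then c[i := (THE x'. switch_elem P lam (c ! (i - 1)) (c ! i) (c ! Suc i) x')]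
      else c)"

definition G_edge :: "'a::order set \<Rightarrow> ('a \<Rightarrow> 'a \<Rightarrow> 'l::order) \<Rightarrow> 'a \<Rightarrow> 'a \<Rightarrow> 'a list \<Rightarrow> 'a list \<Rightarrow> bool" where
  "G_edge P lam x y c d \<longleftrightarrow> maxchain P x y c \<and> maxchain P x y d \<and>
     (\<exists>i. U P lam i c = d \<and> d \<noteq> c)"

definition is_sink :: "'a::order set \<Rightarrow> ('a \<Rightarrow> 'a \<Rightarrow> 'l::order) \<Rightarrow> 'a \<Rightarrow> 'a \<Rightarrow> 'a list \<Rightarrow> bool" where
  "is_sink P lam x y c \<longleftrightarrow> maxchain P x y c \<and> \<not> (\<exists>d. G_edge P lam x y c d)"

definition G_connected :: "'a::order set \<Rightarrow> ('a \<Rightarrow> 'a \<Rightarrow> 'l::order) \<Rightarrow> 'a \<Rightarrow> 'a \<Rightarrow> 'a list \<Rightarrow> 'a list \<Rightarrow> bool" where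
  "G_connected P lam x y = (\<lambda>c d. G_edge P lam x y c d \<or> G_edge P lam x y d c)\<^sup>*\<^sup>*"

definition braid_relation :: "'a::order set \<Rightarrow> ('a \<Rightarrow> 'a \<Rightarrow> 'l::order) \<Rightarrow> bool" where
  "braid_relation P lam \<longleftrightarrow>
     (\<forall>x y c i. x \<in> P \<and> y \<in> P \<and> x \<le> y \<and> maxchain P x y c \<and>
        ascent_at lam c i \<and> ascent_at lam c (Suc i) \<longrightarrow>
        U P lam i (U P lam (Suc i) (U P lam i c)) =
        U P lam (Suc i) (U P lam i (U P lam (Suc i) c)))"

end

theory Submission
  imports Defs
begin


lemma lw_len: "length (label_word lam c) = length c - 1"
  by (simp add: label_word_def)

lemma lw_nth: "k < length c - 1 \<Longrightarrow> label_word lam c ! k = lam (c!k) (c!Suc k)"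
  by (simp add: label_word_def)

lemma ascent_lw: "ascent_at lam c i \<longleftrightarrow> 1 \<le> i \<and> Suc i < length c \<and>
   label_word lam c ! (i-1) < label_word lam c ! i"
  unfolding ascent_at_def by (auto simp: lw_nth)

lemma sat_cov: "sat_chain P c \<Longrightarrow> Suc i < length c \<Longrightarrow> cov P (c!i) (c!Suc i)"
  by (simp add: sat_chain_def)

lemma cov_less: "cov P a b \<Longrightarrow> a < b" by (simp add: cov_def)

lemma sat_sorted: "sat_chain P c \<Longrightarrow> sorted_wrt (<) c"
  by (subst sorted_wrt_iff_nth_Suc_transp) (auto simp: sat_chain_def cov_def transp_def)

lemma sat_set: "sat_chain P c \<Longrightarrow> hd c \<in> P \<Longrightarrow> set c \<subseteq> P"
proof
  fix z assume s: "sat_chain P c" and h: "hd c \<in> P" and "z \<in> set c"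
  then obtain k where k: "k < length c" "z = c!k" by (auto simp: in_set_conv_nth)
  show "z \<in> P"
  proof (cases "Suc k < length c")
    case True then show ?thesis using sat_cov[OF s True] k by (simp add: cov_def)
  next
    case False
    show ?thesis
    proof (cases k)
      case 0 then show ?thesis using k h s by (simp add: hd_conv_nth sat_chain_def)
    next
      case (Suc k')
    then have "k = Suc (k - 1)" by simp
    then have "cov P (c!(k-1)) (c!k)" using sat_cov[OF s, of "k-1"] k by simp
    then show ?thesis using k by (simp add: cov_def)
  qed
  qed
qed

lemma finite_maxchains: assumes "finite P" "x \<in> P" shows "finite {c. maxchain P x y c}"
proof -
  have "{c. maxchain P x y c} \<subseteq> {xs. set xs \<subseteq> P \<and> length xs \<le> card P}"
  proof
    fix c assume "c \<in> {c. maxchain P x y c}"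
    then have m: "maxchain P x y c" by simp
    then have s: "sat_chain P c" by (simp add: maxchain_def)
    have h: "hd c \<in> P" using m assms(2) by (simp add: maxchain_def)
    have A: "set c \<subseteq> P" using sat_set[OF s h] .
    have "distinct c" unfolding distinct_conv_nth
    proof (intro allI impI)
      fix i j assume "i < length c" "j < length c" "i \<noteq> j"
      then show "c!i \<noteq> c!j" using sat_sorted[OF s]
        by (metis linorder_neq_iff order_less_irrefl sorted_wrt_nth_less)
    qed
    then have "length c \<le> card P" using sat_set[OF s h] assms
      by (metis card_mono distinct_card)
    then show "c \<in> {xs. set xs \<subseteq> P \<and> length xs \<le> card P}" using A by simp
  qed
  then show ?thesis using finite_lists_length_le[OF assms(1)] finite_subset by blast
qed

context
  fixes P :: "'a::order set" and zero :: 'a and lam :: "'a \<Rightarrow> 'a \<Rightarrow> 'l::order"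
  assumes zP: "zero \<in> P" and zle: "\<forall>z\<in>P. zero \<le> z" and ER: "ER_labeling P lam"
   and RS: "rank_two_switching P zero lam"
begin

lemma sw_ex1:
  assumes s: "sat_chain P c" and asc: "ascent_at lam c i"
  shows "\<exists>!x'. switch_elem P lam (c!(i-1)) (c!i) (c!Suc i) x'"
proof -
  define a b d where "a = c!(i-1)" "b = c!i" "d = c!Suc i"
  have i1: "1 \<le> i" "Suc i < length c" and lt: "lam a b < lam b d"
    using asc by (auto simp: ascent_at_def a_b_d_def)
  have cab: "cov P a b" using sat_cov[OF s, of "i-1"] i1 by (simp add: a_b_d_def)
  have cbd: "cov P b d" using sat_cov[OF s, of "i"] i1 by (simp add: a_b_d_def)
  have aP: "a \<in> P" using cab by (simp add: cov_def)
  obtain q where q: "maxchain P zero a q"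
    using ER aP zP zle unfolding ER_labeling_def by blast
  have qne: "q \<noteq> []" and qhd: "hd q = zero" and qlast: "last q = a" and qs: "sat_chain P q"
    using q by (auto simp: maxchain_def sat_chain_def)
  define e where "e = q @ [b, d]"
  have en: "e ! (length q - 1) = a" "e ! length q = b" "e ! Suc (length q) = d"
    using qne qlast by (auto simp: e_def nth_append last_conv_nth)
  have es: "sat_chain P e"
    unfolding sat_chain_def
  proof (intro conjI allI impI)
    show "e \<noteq> []" by (simp add: e_def)
    fix k assume k: "Suc k < length e"
    consider "Suc k < length q" | "k = length q - 1" | "k = length q"
    proof -
      have "length q \<ge> 1" "Suc k < length q + 2" using qne k by (auto simp: e_def Suc_le_eq)
      then have "Suc k < length q \<or> k = length q - 1 \<or> k = length q" by linarith
      then show ?thesis using that by blast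
    qed
    then show "cov P (e ! k) (e ! Suc k)"
    proof cases
      case 1 then show ?thesis using sat_cov[OF qs 1] by (simp add: e_def nth_append)
    next
      case 2 then show ?thesis using en cab qne by (cases q) auto
    next
      case 3 then show ?thesis using en cbd by simp
    qed
  qed
  have ehd: "hd e = zero" using qne qhd by (simp add: e_def)
  have easc: "ascent_at lam e (length q)"
    unfolding ascent_at_def using qne en lt by (cases q) (auto simp: e_def)
  have "\<exists>!x'. switch_elem P lam (e!(length q-1)) (e!length q) (e!Suc (length q)) x'"
    using RS es ehd easc unfolding rank_two_switching_def by blast
  then show ?thesis using en by (simp add: a_b_d_def)
qed

lemma U_asc:
  assumes s: "sat_chain P c" and asc: "ascent_at lam c i"
  shows "\<exists>x'. U P lam i c = c[i:=x'] \<and> switch_elem P lam (c!(i-1)) (c!i) (c!Suc i) x'"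
  using theI'[OF sw_ex1[OF s asc]] asc by (auto simp: U_def)

lemma U_props:
  assumes m: "maxchain P x y c" and asc: "ascent_at lam c i"
  shows "maxchain P x y (U P lam i c) \<and> U P lam i c \<noteq> c \<and> length (U P lam i c) = length c \<and>
    label_word lam (U P lam i c) = (label_word lam c)[i-1 := label_word lam c ! i, i := label_word lam c ! (i-1)]"
proof -
  have s: "sat_chain P c" using m by (simp add: maxchain_def)
  obtain x' where U: "U P lam i c = c[i:=x']" and sw: "switch_elem P lam (c!(i-1)) (c!i) (c!Suc i) x'"
    using U_asc[OF s asc] by blast
  have i1: "1 \<le> i" "Suc i < length c" and lt: "lam (c!(i-1)) (c!i) < lam (c!i) (c!Suc i)"
    using asc by (auto simp: ascent_at_def)
  have sw1: "cov P (c!(i-1)) x'" "cov P x' (c!Suc i)" "lam (c!(i-1)) x' = lam (c!i) (c!Suc i)"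
    "lam x' (c!Suc i) = lam (c!(i-1)) (c!i)" using sw by (auto simp: switch_elem_def)
  define c' where "c' = c[i:=x']"
  have len: "length c' = length c" by (simp add: c'_def)
  have ne: "x' \<noteq> c!i" using sw1 lt by auto
  have c'i: "c' ! i = x'" using i1 by (simp add: c'_def)
  have c'o: "\<And>k. k \<noteq> i \<Longrightarrow> c' ! k = c ! k" by (simp add: c'_def)
  have neq: "c' \<noteq> c" using c'i ne by auto
  have sc: "sat_chain P c'"
    unfolding sat_chain_def
  proof (intro conjI allI impI)
    show "c' \<noteq> []" using i1 by (auto simp: c'_def)
    fix k assume k: "Suc k < length c'"
    show "cov P (c' ! k) (c' ! Suc k)"
    proof (cases "k = i - 1")
      case True then show ?thesis using i1 c'i c'o[of "i-1"] sw1 by (simp add: Suc_diff_le)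
    next
      case False
      show ?thesis
      proof (cases "k = i")
        case True then show ?thesis using c'i c'o[of "Suc i"] sw1 by simp
      next
        case False2: False
        have "Suc k \<noteq> i" using False i1 by auto
        then show ?thesis using c'o[of k] c'o[of "Suc k"] False2 sat_cov[OF s] k len by simp
      qed
    qed
  qed
  have hd: "hd c' = hd c" using i1 c'o[of 0] s by (auto simp: hd_conv_nth sat_chain_def c'_def)
  have lst: "last c' = last c" using i1 c'o[of "length c - 1"] s len
    by (auto simp: last_conv_nth sat_chain_def c'_def)
  have mc: "maxchain P x y c'" using m sc hd lst by (simp add: maxchain_def)
  have lw: "label_word lam c' = (label_word lam c)[i-1 := label_word lam c ! i, i := label_word lam c ! (i-1)]"
  proof (rule nth_equalityI)
    show "length (label_word lam c') = length ((label_word lam c)[i-1 := label_word lam c ! i, i := label_word lam c ! (i-1)])"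
      by (simp add: lw_len len)
    fix k assume "k < length (label_word lam c')"
    then have k: "k < length c - 1" by (simp add: lw_len len)
    have A: "label_word lam c' ! k = lam (c'!k) (c'!Suc k)" using k len by (simp add: lw_nth)
    have li: "label_word lam c ! i = lam (c!i) (c!Suc i)" using i1 by (simp add: lw_nth)
    have li1: "label_word lam c ! (i-1) = lam (c!(i-1)) (c!i)" using i1 lw_nth[of "i-1" c lam] by simp
    show "label_word lam c' ! k = (label_word lam c)[i-1 := label_word lam c ! i, i := label_word lam c ! (i-1)] ! k"
    proof (cases "k = i - 1")
      case True then show ?thesis using A i1 c'i c'o[of "i-1"] sw1 li k by (simp add: Suc_diff_le lw_len)
    next
      case False
      show ?thesis
      proof (cases "k = i")
        case True then show ?thesis using A c'i c'o[of "Suc i"] sw1 li1 k by (simp add: lw_len)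
      next
        case False2: False
        have "Suc k \<noteq> i" using False i1 by auto
        then show ?thesis using A c'o[of k] c'o[of "Suc k"] False False2 k lw_nth[of k c lam] by simp
      qed
    qed
  qed
  show ?thesis using mc neq len lw U by (simp add: c'_def)
qed

lemma no_asc_U: "\<not> ascent_at lam c i \<Longrightarrow> U P lam i c = c"
  by (simp add: U_def)

lemma edge_iff: "G_edge P lam x y c d \<longleftrightarrow> maxchain P x y c \<and> (\<exists>i. ascent_at lam c i \<and> d = U P lam i c)"
proof
  assume "G_edge P lam x y c d"
  then obtain i where "maxchain P x y c" "U P lam i c = d" "d \<noteq> c" by (auto simp: G_edge_def)
  then show "maxchain P x y c \<and> (\<exists>i. ascent_at lam c i \<and> d = U P lam i c)"
    using no_asc_U[of c i] by metis
next
  assume "maxchain P x y c \<and> (\<exists>i. ascent_at lam c i \<and> d = U P lam i c)"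
  then show "G_edge P lam x y c d" using U_props by (auto simp: G_edge_def)
qed

lemma edge_maxchain: "G_edge P lam x y c d \<Longrightarrow> maxchain P x y d"
  by (simp add: G_edge_def)

lemma lexord_swap:
  assumes "1 \<le> i" "i < length w" "(w!(i-1), w!i) \<in> r"
  shows "(w, w[i-1 := w!i, i := w!(i-1)]) \<in> lexord r"
  unfolding lexord_take_index_conv
proof (intro disjI2 exI[of _ "i-1"] conjI)
  show "i - 1 < min (length w) (length (w[i-1 := w!i, i := w!(i-1)]))" using assms by simp
  show "take (i - 1) w = take (i - 1) (w[i-1 := w!i, i := w!(i-1)])" using assms by simp
  show "(w ! (i - 1), w[i-1 := w!i, i := w!(i-1)] ! (i - 1)) \<in> r" using assms by simp
qed

lemma edge_lex:
  assumes "G_edge P lam x y c d"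
  shows "(label_word lam c, label_word lam d) \<in> lexord {(a,b). a < b}"
proof -
  obtain i where m: "maxchain P x y c" and a: "ascent_at lam c i" and d: "d = U P lam i c"
    using assms edge_iff by blast
  have "1 \<le> i" "i < length (label_word lam c)" "label_word lam c ! (i-1) < label_word lam c ! i"
    using a by (auto simp: ascent_lw lw_len)
  then show ?thesis using U_props[OF m a] d lexord_swap[of i "label_word lam c" "{(a,b). a < b}"] by simp
qed

lemma wf_edges:
  assumes "finite P" "x \<in> P"
  shows "wf {(d,c). G_edge P lam x y c d}"
proof (rule finite_acyclic_wf)
  let ?S = "{(d,c). G_edge P lam x y c d}"
  have "?S \<subseteq> {c. maxchain P x y c} \<times> {c. maxchain P x y c}"
    by (auto simp: G_edge_def)
  then show "finite ?S" using finite_maxchains[OF assms] by (meson finite_SigmaI finite_subset)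
  have tr: "trans {(a::'l,b). a < b}" by (auto simp: trans_def)
  have "(a, b) \<in> ?S\<^sup>+ \<Longrightarrow> (label_word lam b, label_word lam a) \<in> lexord {(a,b). a < b}" for a b
  proof (induction rule: trancl_induct)
    case (base y) then show ?case using edge_lex by auto
  next
    case (step b' c')
    have "(label_word lam c', label_word lam b') \<in> lexord {(a,b). a < b}"
      using step.hyps(2) edge_lex by simp
    then show ?case using step.IH lexord_trans[OF _ _ tr] by blast
  qed
  then show "acyclic ?S" unfolding acyclic_def
    using lexord_irreflexive[of "{(a::'l,b). a < b}"] by auto
qed

lemma sink_iff_af:
  assumes "maxchain P x y s"
  shows "is_sink P lam x y s \<longleftrightarrow> ascent_free lam s"
proof -
  have "is_sink P lam x y s \<longleftrightarrow> (\<forall>i. \<not> ascent_at lam s i)"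
    using assms by (auto simp: is_sink_def edge_iff)
  also have "\<dots> \<longleftrightarrow> ascent_free lam s"
    unfolding ascent_free_def ascent_lw lw_len
  proof safe
    fix j assume H: "\<forall>i. \<not> (1 \<le> i \<and> Suc i < length s \<and> label_word lam s ! (i - 1) < label_word lam s ! i)"
      "Suc j < length s - 1" "label_word lam s ! j < label_word lam s ! Suc j"
    then show False using H(1)[rule_format, of "Suc j"] by simp
  next
    fix i assume H: "\<forall>j. Suc j < length s - 1 \<longrightarrow> \<not> label_word lam s ! j < label_word lam s ! Suc j"
      "1 \<le> i" "Suc i < length s" "label_word lam s ! (i - 1) < label_word lam s ! i"
    have e: "Suc (i-1) = i" using H(2) by simp
    have "Suc (i-1) < length s - 1" using H(3) e by linarith
    then show False using H(1)[rule_format, of "i-1"] H(4) e by simp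
  qed
  finally show ?thesis .
qed

lemma commute_far:
  assumes m: "maxchain P x y c" and ai: "ascent_at lam c i" and aj: "ascent_at lam c j" and ij: "Suc i < j"
  shows "ascent_at lam (U P lam i c) j \<and> ascent_at lam (U P lam j c) i \<and>
         U P lam j (U P lam i c) = U P lam i (U P lam j c)"
proof -
  define Ti where "Ti = (THE x'. switch_elem P lam (c ! (i - 1)) (c ! i) (c ! Suc i) x')"
  define Tj where "Tj = (THE x'. switch_elem P lam (c ! (j - 1)) (c ! j) (c ! Suc j) x')"
  have Ui: "U P lam i c = c[i := Ti]" using ai by (simp add: U_def Ti_def)
  have Uj: "U P lam j c = c[j := Tj]" using aj by (simp add: U_def Tj_def)
  have i1: "1 \<le> i" "Suc i < length c" "1 \<le> j" "Suc j < length c" using ai aj by (auto simp: ascent_at_def)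
  have neq: "j - 1 \<noteq> i" "j \<noteq> i" "Suc j \<noteq> i" "i - 1 \<noteq> j" "Suc i \<noteq> j" using ij by auto
  have A1: "ascent_at lam (c[i := Ti]) j" using aj neq by (simp add: ascent_at_def)
  have A2: "ascent_at lam (c[j := Tj]) i" using ai neq by (simp add: ascent_at_def)
  have "U P lam j (c[i := Ti]) = c[i := Ti, j := Tj]"
    using A1 neq by (simp add: U_def Tj_def)
  moreover have "U P lam i (c[j := Tj]) = c[j := Tj, i := Ti]"
    using A2 neq by (simp add: U_def Ti_def)
  ultimately show ?thesis using A1 A2 Ui Uj neq by (simp add: list_update_swap)
qed

lemma braid_join:
  assumes m: "maxchain P x y c" and ai: "ascent_at lam c i" and aj: "ascent_at lam c (Suc i)"
    and br: "braid_relation P lam" and xy: "x \<in> P" "y \<in> P" "x \<le> y"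
  shows "\<exists>e. (G_edge P lam x y)\<^sup>*\<^sup>* (U P lam i c) e \<and> (G_edge P lam x y)\<^sup>*\<^sup>* (U P lam (Suc i) c) e"
proof -
  let ?R = "G_edge P lam x y"
  define w where "w = label_word lam c"
  have i1: "1 \<le> i" "Suc (Suc i) < length c" using ai aj by (auto simp: ascent_at_def)
  have neq: "i - 1 \<noteq> i" "i - 1 \<noteq> Suc i" using i1 by auto
  have ab: "w!(i-1) < w!i" and bc: "w!i < w!Suc i" using ai aj by (auto simp: ascent_lw w_def)
  have ac: "w!(i-1) < w!Suc i" using ab bc by (rule less_trans)
  have lw: "length w = length c - 1" by (simp add: w_def lw_len)
  define c1 where "c1 = U P lam i c"
  have P1: "maxchain P x y c1" "length c1 = length c" "label_word lam c1 = w[i-1 := w!i, i := w!(i-1)]"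
    "?R c c1" using U_props[OF m ai] m ai by (auto simp: c1_def w_def edge_iff)
  have a1: "ascent_at lam c1 (Suc i)" using P1 i1 neq ac lw by (simp add: ascent_lw)
  define c2 where "c2 = U P lam (Suc i) c1"
  have P2: "maxchain P x y c2" "length c2 = length c" "label_word lam c2 = (label_word lam c1)[i := label_word lam c1 ! Suc i, Suc i := label_word lam c1 ! i]"
    "?R c1 c2" using U_props[OF P1(1) a1] P1 a1 by (auto simp: c2_def edge_iff)
  have a2: "ascent_at lam c2 i" using P2 P1 i1 neq bc lw by (simp add: ascent_lw)
  define c3 where "c3 = U P lam i c2"
  have P3: "?R c2 c3" using P2 a2 by (auto simp: c3_def edge_iff)
  define d1 where "d1 = U P lam (Suc i) c"
  have Q1: "maxchain P x y d1" "length d1 = length c" "label_word lam d1 = w[Suc i - 1 := w!Suc i, Suc i := w!(Suc i-1)]"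
    using U_props[OF m aj] by (auto simp: d1_def w_def)
  have b1: "ascent_at lam d1 i" using Q1 i1 neq ac lw by (simp add: ascent_lw)
  define d2 where "d2 = U P lam i d1"
  have Q2: "maxchain P x y d2" "length d2 = length c" "label_word lam d2 = (label_word lam d1)[i - 1 := label_word lam d1 ! i, i := label_word lam d1 ! (i-1)]"
    "?R d1 d2" using U_props[OF Q1(1) b1] Q1 b1 by (auto simp: d2_def edge_iff)
  have b2: "ascent_at lam d2 (Suc i)" using Q2 Q1 i1 neq ab lw by (simp add: ascent_lw)
  define d3 where "d3 = U P lam (Suc i) d2"
  have Q3: "?R d2 d3" using Q2 b2 by (auto simp: d3_def edge_iff)
  have eq: "c3 = d3" using br xy m ai aj unfolding braid_relation_def c3_def c2_def c1_def d3_def d2_def d1_def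
    by blast
  have "?R\<^sup>*\<^sup>* c1 c3" using P2(4) P3 by auto
  moreover have "?R\<^sup>*\<^sup>* d1 c3" using Q2(4) Q3 eq by auto
  ultimately show ?thesis unfolding c1_def d1_def by blast
qed

lemma local_conf:
  assumes br: "braid_relation P lam" and xy: "x \<in> P" "y \<in> P" "x \<le> y"
    and e1: "G_edge P lam x y c d1" and e2: "G_edge P lam x y c d2"
  shows "\<exists>e. (G_edge P lam x y)\<^sup>*\<^sup>* d1 e \<and> (G_edge P lam x y)\<^sup>*\<^sup>* d2 e"
proof -
  let ?R = "G_edge P lam x y"
  obtain i where m: "maxchain P x y c" and ai: "ascent_at lam c i" and d1: "d1 = U P lam i c"
    using e1 edge_iff by blast
  obtain j where aj: "ascent_at lam c j" and d2: "d2 = U P lam j c"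
    using e2 edge_iff by blast
  have far: "\<exists>e. ?R\<^sup>*\<^sup>* (U P lam i' c) e \<and> ?R\<^sup>*\<^sup>* (U P lam j' c) e"
    if a1: "ascent_at lam c i'" and a2: "ascent_at lam c j'" and lt: "Suc i' < j'" for i' j'
  proof -
    note C = commute_far[OF m a1 a2 lt]
    have "?R (U P lam i' c) (U P lam j' (U P lam i' c))"
      using C U_props[OF m a1] by (auto simp: edge_iff)
    moreover have "?R (U P lam j' c) (U P lam i' (U P lam j' c))"
      using C U_props[OF m a2] by (auto simp: edge_iff)
    ultimately show ?thesis using C by (metis r_into_rtranclp)
  qed
  consider "i = j" | "Suc i = j" | "Suc j = i" | "Suc i < j" | "Suc j < i" by linarith
  then show ?thesis
  proof cases
    case 1 then show ?thesis using d1 d2 by blast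
  next
    case 2 then show ?thesis using braid_join[OF m ai _ br xy] aj d1 d2 by blast
  next
    case 3 then show ?thesis using braid_join[OF m aj _ br xy] ai d1 d2 by blast
  next
    case 4 then show ?thesis using far[OF ai aj] d1 d2 by blast
  next
    case 5 then show ?thesis using far[OF aj ai] d1 d2 by blast
  qed
qed

end

lemma newman:
  assumes wf: "wf {(d,c). R c d}"
    and lc: "\<And>c d1 d2. R c d1 \<Longrightarrow> R c d2 \<Longrightarrow> \<exists>e. R\<^sup>*\<^sup>* d1 e \<and> R\<^sup>*\<^sup>* d2 e"
  shows "R\<^sup>*\<^sup>* c d1 \<Longrightarrow> R\<^sup>*\<^sup>* c d2 \<Longrightarrow> \<exists>e. R\<^sup>*\<^sup>* d1 e \<and> R\<^sup>*\<^sup>* d2 e"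
  using wf
proof (induction c arbitrary: d1 d2 rule: wf_induct_rule)
  case (less c)
  from less.prems(1) show ?case
  proof (cases rule: converse_rtranclpE)
    case base then show ?thesis using less.prems(2) by blast
  next
    case (step b1)
    note s1 = step
    from less.prems(2) show ?thesis
    proof (cases rule: converse_rtranclpE)
      case base then show ?thesis using less.prems(1) by blast
    next
      case (step b2)
      obtain e where e: "R\<^sup>*\<^sup>* b1 e" "R\<^sup>*\<^sup>* b2 e" using lc[OF s1(1) step(1)] by blast
      obtain f where f: "R\<^sup>*\<^sup>* d1 f" "R\<^sup>*\<^sup>* e f"
        using less.IH[of b1 d1 e] s1 e by blast
      have "R\<^sup>*\<^sup>* b2 f" using e(2) f(2) by simp
      then obtain g where g: "R\<^sup>*\<^sup>* f g" "R\<^sup>*\<^sup>* d2 g"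
        using less.IH[of b2 f d2] step by blast
      show ?thesis using f g by (meson rtranclp_trans)
    qed
  qed
qed

lemma church_rosser:
  assumes confA: "\<forall>c d1 d2. R\<^sup>*\<^sup>* c d1 \<longrightarrow> R\<^sup>*\<^sup>* c d2 \<longrightarrow> (\<exists>e. R\<^sup>*\<^sup>* d1 e \<and> R\<^sup>*\<^sup>* d2 e)"
  shows "(\<lambda>a b. R a b \<or> R b a)\<^sup>*\<^sup>* c d \<Longrightarrow> \<exists>e. R\<^sup>*\<^sup>* c e \<and> R\<^sup>*\<^sup>* d e"
proof (induction rule: rtranclp_induct)
  case base then show ?case by blast
next
  case (step b d)
  then obtain e where e: "R\<^sup>*\<^sup>* c e" "R\<^sup>*\<^sup>* b e" by blast
  from step(2) show ?case
  proof
    assume "R b d"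
    then have "R\<^sup>*\<^sup>* b d" by simp
    then obtain f where "R\<^sup>*\<^sup>* e f" "R\<^sup>*\<^sup>* d f" using confA e(2) by blast
    then show ?thesis using e(1) by (meson rtranclp_trans)
  next
    assume "R d b"
    then show ?thesis using e by (meson converse_rtranclp_into_rtranclp)
  qed
qed


theorem corollary3p13:
  fixes P :: "'a::order set" and zero :: 'a and lam :: "'a \<Rightarrow> 'a \<Rightarrow> 'l::order"
  assumes "graded_with_bot P zero"
    and "ER_labeling P lam"
    and "rank_two_switching P zero lam"
    and "braid_relation P lam"
    and "x \<in> P" and "y \<in> P" and "x \<le> y"
  shows "(\<forall>c. maxchain P x y c \<longrightarrow>
            (\<exists>!s. G_connected P lam x y c s \<and> is_sink P lam x y s))
         \<and> (\<forall>s. maxchain P x y s \<longrightarrow> (is_sink P lam x y s \<longleftrightarrow> ascent_free lam s))"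
proof -
  let ?R = "G_edge P lam x y"
  have fin: "finite P" and zP: "zero \<in> P" and zle: "\<forall>z\<in>P. zero \<le> z"
    using assms(1) by (auto simp: graded_with_bot_def)
  note ER = assms(2) and RS = assms(3) and br = assms(4) and xy = assms(5-7)
  have wf: "wf {(d,c). ?R c d}" using wf_edges[OF zP zle ER RS fin xy(1)] .
  have lc: "\<And>c d1 d2. ?R c d1 \<Longrightarrow> ?R c d2 \<Longrightarrow> \<exists>e. ?R\<^sup>*\<^sup>* d1 e \<and> ?R\<^sup>*\<^sup>* d2 e"
    using local_conf[OF zP zle ER RS br xy] by blast
  have conf: "\<And>c d1 d2. ?R\<^sup>*\<^sup>* c d1 \<Longrightarrow> ?R\<^sup>*\<^sup>* c d2 \<Longrightarrow> \<exists>e. ?R\<^sup>*\<^sup>* d1 e \<and> ?R\<^sup>*\<^sup>* d2 e"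
  proof -
    fix c d1 d2 assume "?R\<^sup>*\<^sup>* c d1" "?R\<^sup>*\<^sup>* c d2"
    then show "\<exists>e. ?R\<^sup>*\<^sup>* d1 e \<and> ?R\<^sup>*\<^sup>* d2 e"
      using newman[of ?R c d1 d2] wf lc by blast
  qed
  have confA: "\<forall>c d1 d2. ?R\<^sup>*\<^sup>* c d1 \<longrightarrow> ?R\<^sup>*\<^sup>* c d2 \<longrightarrow> (\<exists>e. ?R\<^sup>*\<^sup>* d1 e \<and> ?R\<^sup>*\<^sup>* d2 e)"
    using conf by blast
  have nf: "\<exists>s. ?R\<^sup>*\<^sup>* c s \<and> \<not> (\<exists>d. ?R s d)" for c
    using wf
  proof (induction c rule: wf_induct_rule)
    case (less c)
    show ?case
    proof (cases "\<exists>d. ?R c d")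
      case True
      then obtain d where d: "?R c d" by blast
      then obtain s where "?R\<^sup>*\<^sup>* d s \<and> \<not> (\<exists>d. ?R s d)" using less.IH[of d] by blast
      then show ?thesis using d by (meson converse_rtranclp_into_rtranclp)
    next
      case False then show ?thesis by blast
    qed
  qed
  have mcp: "?R\<^sup>*\<^sup>* c s \<Longrightarrow> maxchain P x y c \<Longrightarrow> maxchain P x y s" for c s
    by (induction rule: rtranclp_induct) (auto simp: G_edge_def)
  let ?E = "\<lambda>a b. ?R a b \<or> ?R b a"
  have Gc: "G_connected P lam x y = ?E\<^sup>*\<^sup>*" by (simp add: G_connected_def)
  have Esym: "conversep ?E = ?E" by (auto simp: fun_eq_iff)
  have part1: "\<exists>!s. G_connected P lam x y c s \<and> is_sink P lam x y s" if mc: "maxchain P x y c" for c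
  proof (rule ex_ex1I)
    obtain s where s: "?R\<^sup>*\<^sup>* c s" "\<not> (\<exists>d. ?R s d)" using nf by blast
    have "?E\<^sup>*\<^sup>* c s" using s(1) by (rule rtranclp_mono[THEN predicate2D, rotated]) auto
    then show "\<exists>s. G_connected P lam x y c s \<and> is_sink P lam x y s"
      using s mcp[OF s(1) mc] Gc by (auto simp: is_sink_def)
  next
    fix s1 s2 assume A: "G_connected P lam x y c s1 \<and> is_sink P lam x y s1"
      "G_connected P lam x y c s2 \<and> is_sink P lam x y s2"
    have "?E\<^sup>*\<^sup>* s1 c" using A(1) Gc rtranclp_converseI[of ?E c s1] Esym by auto
    then have "?E\<^sup>*\<^sup>* s1 s2" using A(2) Gc by auto
    then obtain e where e: "?R\<^sup>*\<^sup>* s1 e" "?R\<^sup>*\<^sup>* s2 e"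
      using church_rosser[OF confA] by blast
    have n1: "\<not> ?R s1 d" "\<not> ?R s2 d" for d using A by (auto simp: is_sink_def)
    have "s1 = e" using e(1) n1(1) by (cases rule: converse_rtranclpE) auto
    moreover have "s2 = e" using e(2) n1(2) by (cases rule: converse_rtranclpE) auto
    ultimately show "s1 = s2" by simp
  qed
  show ?thesis using part1 sink_iff_af[OF zP zle ER RS] by blast
qed

end
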